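(* Under the setting and assumptions in the context, if $\Pr(Y(0)=0,Y(1)=1)>0$, then $$APCE_H=\frac{E[Y\mid Z=1]-E[Y\mid Z=0]}{\Pr(Y(1)=1)-\Pr(Y(0)=1)}.$$
   Context: Units are drawn from a population (a probability space). Each unit has a binary assignment $Z\in\{0,1\}$ with $0<\Pr(Z=1)<1$, binary potential recommendations $R(0),R(1)\in\{0,1\}$, and binary potential outcomes $Y(0),Y(1)\in\{0,1\}$ indexed by the recommendation only (exclusion restriction). Observed quantities are $R=R(Z)$ and $Y=Y(R(Z))$. Assumptions: (Randomization) $Z$ is independent of $(R(0),R(1),Y(0),Y(1))$; (Monotonicity) $Y(1)\ge Y(0)$ almost surely. Principal strata: Always Low $AL=\{Y(0)=Y(1)=0\}$, Always High $AH=\{Y(0)=Y(1)=1\}$, Helpable $H=\{Y(0)=0,Y(1)=1\}$. For a stratum $J$ with positive probability, $APCE_J=E[R(1)-R(0)\mid J]$. *)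

theory Defs
  imports "HOL-Probability.Probability"
begin

definition cond_exp_ev :: "'a measure \<Rightarrow> ('a \<Rightarrow> real) \<Rightarrow> 'a set \<Rightarrow> real" where
  "cond_exp_ev M X A = (\<integral>\<omega>. X \<omega> * indicator A \<omega> \<partial>M) / measure M A"

end

theory Submission
  imports Defs
begin

lemma int_finite_rv:
  fixes X :: "'a \<Rightarrow> 'b::finite" and g :: "'b \<Rightarrow> real"
  assumes P: "prob_space M" and S: "\<And>b. {\<omega>\<in>space M. X \<omega> = b} \<in> sets M"
  shows "(\<integral>\<omega>. g (X \<omega>) \<partial>M) = (\<Sum>b\<in>UNIV. g b * measure M {\<omega>\<in>space M. X \<omega> = b})"
proof -
  interpret prob_space M by (rule P)
  have "(\<integral>\<omega>. g (X \<omega>) \<partial>M) = (\<integral>\<omega>. (\<Sum>b\<in>UNIV. g b * indicator {\<omega>\<in>space M. X \<omega> = b} \<omega>) \<partial>M)"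
  proof (rule Bochner_Integration.integral_cong[OF refl])
    fix \<omega> assume "\<omega> \<in> space M"
    have "(\<Sum>b\<in>UNIV. g b * indicator {\<omega>\<in>space M. X \<omega> = b} \<omega>) = (\<Sum>b\<in>{X \<omega>}. g b * indicator {\<omega>\<in>space M. X \<omega> = b} \<omega>)"
      by (rule sum.mono_neutral_right) (auto simp: indicator_def)
    then show "g (X \<omega>) = (\<Sum>b\<in>UNIV. g b * indicator {\<omega>\<in>space M. X \<omega> = b} \<omega>)"
      using \<open>\<omega> \<in> space M\<close> by (simp add: indicator_def)
  qed
  also have "\<dots> = (\<Sum>b\<in>UNIV. (\<integral>\<omega>. g b * indicator {\<omega>\<in>space M. X \<omega> = b} \<omega> \<partial>M))"
    by (rule Bochner_Integration.integral_sum) (auto intro!: integrable_mult_right integrable_real_indicator S simp: less_top[symmetric])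
  also have "\<dots> = (\<Sum>b\<in>UNIV. g b * measure M {\<omega>\<in>space M. X \<omega> = b})"
    by (simp add: Int_absorb2)
  finally show ?thesis .
qed

lemma sum_bool_prod:
  fixes f :: "bool \<times> 'b::finite \<Rightarrow> real"
  shows "sum f UNIV = sum (\<lambda>b. f (True, b)) UNIV + sum (\<lambda>b. f (False, b)) UNIV"
proof -
  have "sum f UNIV = sum f (UNIV \<times> UNIV)" by simp
  also have "\<dots> = (\<Sum>a\<in>UNIV. \<Sum>b\<in>UNIV. f (a, b))" by (simp only: sum.cartesian_product')
  finally show ?thesis by (simp add: UNIV_bool add.commute)
qed

lemma sum_bool_real: "sum (f::bool \<Rightarrow> real) UNIV = f True + f False"
  by (simp add: UNIV_bool add.commute)

theorem mainTheorem2: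
  fixes M :: "'a measure"
    and Z R0 R1 Y0 Y1 :: "'a \<Rightarrow> bool"
  assumes P: "prob_space M"
    and mZ: "Z \<in> M \<rightarrow>\<^sub>M count_space UNIV"
    and mR0: "R0 \<in> M \<rightarrow>\<^sub>M count_space UNIV"
    and mR1: "R1 \<in> M \<rightarrow>\<^sub>M count_space UNIV"
    and mY0: "Y0 \<in> M \<rightarrow>\<^sub>M count_space UNIV"
    and mY1: "Y1 \<in> M \<rightarrow>\<^sub>M count_space UNIV"
    and Zpos: "0 < measure M {\<omega>\<in>space M. Z \<omega>}"
    and Zlt1: "measure M {\<omega>\<in>space M. Z \<omega>} < 1"
    and rand: "\<And>z t. measure M {\<omega>\<in>space M. Z \<omega> = z \<and> (R0 \<omega>, R1 \<omega>, Y0 \<omega>, Y1 \<omega>) = t}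
               = measure M {\<omega>\<in>space M. Z \<omega> = z}
                 * measure M {\<omega>\<in>space M. (R0 \<omega>, R1 \<omega>, Y0 \<omega>, Y1 \<omega>) = t}"
    and mono: "AE \<omega> in M. of_bool (Y1 \<omega>) \<ge> (of_bool (Y0 \<omega>) :: real)"
    and Hpos: "0 < measure M {\<omega>\<in>space M. \<not> Y0 \<omega> \<and> Y1 \<omega>}"
  shows
    "let R = (\<lambda>\<omega>. if Z \<omega> then R1 \<omega> else R0 \<omega>);
         Y = (\<lambda>\<omega>. if R \<omega> then Y1 \<omega> else Y0 \<omega>);
         H = {\<omega>\<in>space M. \<not> Y0 \<omega> \<and> Y1 \<omega>}
     in cond_exp_ev M (\<lambda>\<omega>. of_bool (R1 \<omega>) - of_bool (R0 \<omega>)) H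
        = (cond_exp_ev M (\<lambda>\<omega>. of_bool (Y \<omega>)) {\<omega>\<in>space M. Z \<omega>}
           - cond_exp_ev M (\<lambda>\<omega>. of_bool (Y \<omega>)) {\<omega>\<in>space M. \<not> Z \<omega>})
          / (measure M {\<omega>\<in>space M. Y1 \<omega>} - measure M {\<omega>\<in>space M. Y0 \<omega>})"
proof -
  interpret prob_space M by (rule P)
  have pre: "\<And>(f::'a \<Rightarrow> bool) b. f \<in> M \<rightarrow>\<^sub>M count_space UNIV \<Longrightarrow> {\<omega>\<in>space M. f \<omega> = b} \<in> sets M"
  proof -
    fix f :: "'a \<Rightarrow> bool" and b assume "f \<in> M \<rightarrow>\<^sub>M count_space UNIV"
    from measurable_sets[OF this, of "{b}"] show "{\<omega>\<in>space M. f \<omega> = b} \<in> sets M"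
      by (simp add: vimage_def Int_def conj_commute)
  qed
  define T where "T = (\<lambda>\<omega>. (R0 \<omega>, R1 \<omega>, Y0 \<omega>, Y1 \<omega>))"
  define V where "V = (\<lambda>\<omega>. (Z \<omega>, T \<omega>))"
  define a where "a = (\<lambda>t. measure M {\<omega>\<in>space M. T \<omega> = t})"
  define q where "q = measure M {\<omega>\<in>space M. Z \<omega>}"
  have ST: "{\<omega>\<in>space M. T \<omega> = t} \<in> sets M" for t
  proof -
    obtain r0 r1 y0 y1 where t: "t = (r0, r1, y0, y1)" by (cases t) auto
    have "{\<omega>\<in>space M. T \<omega> = t} = {\<omega>\<in>space M. R0 \<omega> = r0} \<inter> {\<omega>\<in>space M. R1 \<omega> = r1}
       \<inter> {\<omega>\<in>space M. Y0 \<omega> = y0} \<inter> {\<omega>\<in>space M. Y1 \<omega> = y1}" by (auto simp: T_def t)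
    then show ?thesis using pre[OF mR0] pre[OF mR1] pre[OF mY0] pre[OF mY1] by auto
  qed
  have SV: "{\<omega>\<in>space M. V \<omega> = v} \<in> sets M" for v
  proof -
    obtain z t where v: "v = (z, t)" by (cases v) auto
    have "{\<omega>\<in>space M. V \<omega> = v} = {\<omega>\<in>space M. Z \<omega> = z} \<inter> {\<omega>\<in>space M. T \<omega> = t}"
      by (auto simp: V_def v)
    then show ?thesis using pre[OF mZ] ST by auto
  qed
  have mV: "measure M {\<omega>\<in>space M. V \<omega> = (z, t)} = measure M {\<omega>\<in>space M. Z \<omega> = z} * a t" for z t
    using rand[of z t] by (simp add: V_def a_def T_def)
  have mZT: "measure M {\<omega>\<in>space M. Z \<omega>} = q" by (simp add: q_def)
  have mZF: "measure M {\<omega>\<in>space M. \<not> Z \<omega>} = 1 - q"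
  proof -
    have "{\<omega>\<in>space M. \<not> Z \<omega>} = space M - {\<omega>\<in>space M. Z \<omega>}" by auto
    then show ?thesis using prob_compl[of "{\<omega>\<in>space M. Z \<omega>}"] pre[OF mZ, of True] by (simp add: q_def)
  qed
  have null: "{\<omega>\<in>space M. Y0 \<omega> \<and> \<not> Y1 \<omega>} \<in> null_sets M"
  proof -
    have S: "{\<omega>\<in>space M. Y0 \<omega> \<and> \<not> Y1 \<omega>} \<in> sets M"
      using pre[OF mY0, of True] pre[OF mY1, of False] by (auto simp: Collect_conj_eq[symmetric] Int_def)
    show ?thesis using mono by (subst AE_iff_null_sets[OF S]) (auto elim!: AE_mp)
  qed
  have a0: "a (r0, r1, True, False) = 0" for r0 r1
  proof -
    have "{\<omega>\<in>space M. T \<omega> = (r0, r1, True, False)} \<subseteq> {\<omega>\<in>space M. Y0 \<omega> \<and> \<not> Y1 \<omega>}"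
      by (auto simp: T_def)
    then have "{\<omega>\<in>space M. T \<omega> = (r0, r1, True, False)} \<in> null_sets M"
      using null ST null_sets_subset by blast
    then show ?thesis by (simp add: a_def measure_def null_setsD1)
  qed
  have intT: "(\<integral>\<omega>. g (T \<omega>) \<partial>M) = (\<Sum>t\<in>UNIV. g t * a t)" for g
    unfolding a_def by (rule int_finite_rv[OF P ST])
  have intV: "(\<integral>\<omega>. g (V \<omega>) \<partial>M) = (\<Sum>t\<in>UNIV. g (True, t) * q * a t) + (\<Sum>t\<in>UNIV. g (False, t) * (1 - q) * a t)" for g
    by (simp only: int_finite_rv[OF P SV], subst sum_bool_prod, simp add: mV mZT mZF mult.assoc)
  have measT: "measure M {\<omega>\<in>space M. p (T \<omega>)} = (\<Sum>t\<in>UNIV. of_bool (p t) * a t)" for p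
  proof -
    have "measure M {\<omega>\<in>space M. p (T \<omega>)} = (\<integral>\<omega>. indicator {\<omega>\<in>space M. p (T \<omega>)} \<omega> \<partial>M)"
      by (simp add: Int_absorb2)
    also have "\<dots> = (\<integral>\<omega>. of_bool (p (T \<omega>)) \<partial>M)"
      by (rule Bochner_Integration.integral_cong) (auto simp: indicator_def)
    finally show ?thesis using intT[of "\<lambda>t. of_bool (p t)"] by simp
  qed
  define H where "H = {\<omega>\<in>space M. \<not> Y0 \<omega> \<and> Y1 \<omega>}"
  define R where "R = (\<lambda>\<omega>. if Z \<omega> then R1 \<omega> else R0 \<omega>)"
  define Y where "Y = (\<lambda>\<omega>. if R \<omega> then Y1 \<omega> else Y0 \<omega>)"
  define gN :: "bool \<times> bool \<times> bool \<times> bool \<Rightarrow> real"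
    where "gN = (\<lambda>(r0, r1, y0, y1). (of_bool r1 - of_bool r0) * of_bool (\<not> y0 \<and> y1))"
  define gY :: "bool \<Rightarrow> bool \<times> bool \<times> bool \<times> bool \<times> bool \<Rightarrow> real"
    where "gY = (\<lambda>zz (z, r0, r1, y0, y1). of_bool (if (if z then r1 else r0) then y1 else y0) * of_bool (z = zz))"
  have e1: "(\<integral>\<omega>. (of_bool (R1 \<omega>) - of_bool (R0 \<omega>)) * indicator H \<omega> \<partial>M) = (\<Sum>t\<in>UNIV. gN t * a t)"
  proof -
    have "(\<integral>\<omega>. (of_bool (R1 \<omega>) - of_bool (R0 \<omega>)) * indicator H \<omega> \<partial>M) = (\<integral>\<omega>. gN (T \<omega>) \<partial>M)"
      by (rule Bochner_Integration.integral_cong) (auto simp: indicator_def H_def gN_def T_def)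
    then show ?thesis using intT by simp
  qed
  have e3: "(\<integral>\<omega>. of_bool (Y \<omega>) * indicator {\<omega>\<in>space M. Z \<omega> = zz} \<omega> \<partial>M)
     = (\<Sum>t\<in>UNIV. gY zz (True, t) * q * a t) + (\<Sum>t\<in>UNIV. gY zz (False, t) * (1 - q) * a t)" for zz
  proof -
    have "(\<integral>\<omega>. of_bool (Y \<omega>) * indicator {\<omega>\<in>space M. Z \<omega> = zz} \<omega> \<partial>M) = (\<integral>\<omega>. gY zz (V \<omega>) \<partial>M)"
      by (rule Bochner_Integration.integral_cong) (auto simp: indicator_def gY_def V_def T_def Y_def R_def)
    then show ?thesis using intV by simp
  qed
  have e2: "measure M H = (\<Sum>t\<in>UNIV. of_bool ((\<lambda>(r0, r1, y0, y1). \<not> y0 \<and> y1) t) * a t)"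
    using measT[of "\<lambda>(r0, r1, y0, y1). \<not> y0 \<and> y1"] by (simp add: H_def T_def)
  have e5: "measure M {\<omega>\<in>space M. Y1 \<omega>} = (\<Sum>t\<in>UNIV. of_bool ((\<lambda>(r0, r1, y0, y1). y1) t) * a t)"
    using measT[of "\<lambda>(r0, r1, y0, y1). y1"] by (simp add: T_def)
  have e6: "measure M {\<omega>\<in>space M. Y0 \<omega>} = (\<Sum>t\<in>UNIV. of_bool ((\<lambda>(r0, r1, y0, y1). y0) t) * a t)"
    using measT[of "\<lambda>(r0, r1, y0, y1). y0"] by (simp add: T_def)
  have e3T: "(\<integral>\<omega>. of_bool (Y \<omega>) * indicator {\<omega>\<in>space M. Z \<omega>} \<omega> \<partial>M)
     = (\<Sum>t\<in>UNIV. gY True (True, t) * q * a t) + (\<Sum>t\<in>UNIV. gY True (False, t) * (1 - q) * a t)"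
    using e3[of True] by simp
  have e3F: "(\<integral>\<omega>. of_bool (Y \<omega>) * indicator {\<omega>\<in>space M. \<not> Z \<omega>} \<omega> \<partial>M)
     = (\<Sum>t\<in>UNIV. gY False (True, t) * q * a t) + (\<Sum>t\<in>UNIV. gY False (False, t) * (1 - q) * a t)"
    using e3[of False] by simp
  have q0: "q \<noteq> 0" "1 - q \<noteq> 0" using Zpos Zlt1 by (auto simp: q_def)
  have h0: "measure M H \<noteq> 0" using Hpos by (simp add: H_def)
  have e5': "measure M {\<omega>\<in>space M. Y1 \<omega>} - measure M {\<omega>\<in>space M. Y0 \<omega>} = measure M H"
    unfolding e5 e6 e2 by (simp add: sum_bool_prod sum_bool_real a0)
  have eT: "cond_exp_ev M (\<lambda>\<omega>. of_bool (Y \<omega>)) {\<omega>\<in>space M. Z \<omega>} = (\<Sum>t\<in>UNIV. gY True (True, t) * a t)"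
    unfolding cond_exp_ev_def e3T mZT using q0 by (simp add: gY_def mult.commute mult.left_commute flip: sum_distrib_left)
  have eF: "cond_exp_ev M (\<lambda>\<omega>. of_bool (Y \<omega>)) {\<omega>\<in>space M. \<not> Z \<omega>} = (\<Sum>t\<in>UNIV. gY False (False, t) * a t)"
  proof -
    have z: "gY False (True, t) = 0" for t by (simp add: gY_def split: prod.splits)
    have s: "(\<Sum>t\<in>UNIV. gY False (False, t) * (1 - q) * a t) = (1 - q) * (\<Sum>t\<in>UNIV. gY False (False, t) * a t)"
      by (simp add: sum_distrib_left mult_ac)
    show ?thesis unfolding cond_exp_ev_def e3F mZF s using q0 by (simp add: z)
  qed
  have "cond_exp_ev M (\<lambda>\<omega>. of_bool (R1 \<omega>) - of_bool (R0 \<omega>)) H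
        = (cond_exp_ev M (\<lambda>\<omega>. of_bool (Y \<omega>)) {\<omega>\<in>space M. Z \<omega>}
           - cond_exp_ev M (\<lambda>\<omega>. of_bool (Y \<omega>)) {\<omega>\<in>space M. \<not> Z \<omega>})
          / (measure M {\<omega>\<in>space M. Y1 \<omega>} - measure M {\<omega>\<in>space M. Y0 \<omega>})"
    unfolding e5' eT eF unfolding cond_exp_ev_def e1
    by (rule arg_cong[where f = "\<lambda>x. x / measure M H"]) (simp add: gY_def gN_def sum_bool_prod sum_bool_real a0 algebra_simps)
  then show ?thesis by (simp add: Let_def H_def Y_def R_def)
qed

end
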